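(* For every infinite word $u\in A^{\mathbb{N}}$, the worm $W(u)$ tiles the integer half-space by translations: $\mathbb{H}=W(u)\oplus\Lambda$, i.e. every $z\in\mathbb{H}$ is written uniquely as $w+t$ with $w\in W(u)$, $t\in\Lambda$.
   Context: $A=\{0,\dots,d\}$, $h(y)=\sum_iy_i$ on $\mathbb{R}^{d+1}$, $\mathbb{H}=\{z\in\mathbb{Z}^{d+1}:h(z)\ge0\}$, $\Lambda=\{z\in\mathbb{Z}^{d+1}:h(z)=0\}$. $W(u)=\{\mathrm{ab}(p):p\text{ finite prefix of }u\}$, where $\mathrm{ab}(p)\in\mathbb{Z}^{d+1}$ counts the occurrences of each letter in $p$. *)

theory Defs
  imports Main
begin

text \<open>Alphabet A = {0..d}. Vectors of Z^(d+1) are represented as functions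
  nat => int vanishing outside {0..d}. An infinite word over A is a
  function u :: nat => nat with u k <= d for all k.\<close>

definition lattice_vecs :: "nat \<Rightarrow> (nat \<Rightarrow> int) set" where
  "lattice_vecs d = {z. \<forall>i>d. z i = 0}"

definition hsum :: "nat \<Rightarrow> (nat \<Rightarrow> int) \<Rightarrow> int" where
  "hsum d z = (\<Sum>i\<le>d. z i)"

definition halfspace :: "nat \<Rightarrow> (nat \<Rightarrow> int) set" where
  "halfspace d = {z \<in> lattice_vecs d. hsum d z \<ge> 0}"

definition Lam :: "nat \<Rightarrow> (nat \<Rightarrow> int) set" where
  "Lam d = {z \<in> lattice_vecs d. hsum d z = 0}"

definition ab_prefix :: "nat \<Rightarrow> (nat \<Rightarrow> nat) \<Rightarrow> nat \<Rightarrow> (nat \<Rightarrow> int)" where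
  "ab_prefix d u n = (\<lambda>i. if i \<le> d then int (card {k. k < n \<and> u k = i}) else 0)"

definition worm :: "nat \<Rightarrow> (nat \<Rightarrow> nat) \<Rightarrow> (nat \<Rightarrow> int) set" where
  "worm d u = {ab_prefix d u n | n. True}"

end

theory Submission
  imports Defs
begin

lemma card_step: "card {k. k < Suc n \<and> u k = i} = card {k. k < n \<and> u k = (i::nat)} + (if u n = i then 1 else 0)"
proof -
  have "{k. k < Suc n \<and> u k = i} = (if u n = i then insert n {k. k < n \<and> u k = i} else {k. k < n \<and> u k = i})"
    by (auto simp: less_Suc_eq)
  then show ?thesis by auto
qed

lemma hsum_ab:
  assumes "\<forall>k. u k \<le> d"
  shows "hsum d (ab_prefix d u n) = int n"
proof (induction n)
  case 0
  then show ?case by (simp add: hsum_def ab_prefix_def)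
next
  case (Suc n)
  have "hsum d (ab_prefix d u (Suc n)) = (\<Sum>i\<le>d. int (card {k. k < n \<and> u k = i}) + (if u n = i then 1 else 0))"
    unfolding hsum_def ab_prefix_def by (rule sum.cong) (auto simp: card_step)
  also have "\<dots> = hsum d (ab_prefix d u n) + (\<Sum>i\<le>d. (if u n = i then 1 else 0))"
    unfolding hsum_def ab_prefix_def by (simp add: sum.distrib)
  also have "(\<Sum>i\<le>d. (if u n = i then 1 else 0::int)) = 1"
    using assms by (simp add: sum.delta)
  finally show ?case using Suc by simp
qed

lemma hsum_diff: "hsum d (\<lambda>i. a i - b i) = hsum d a - hsum d b"
  by (simp add: hsum_def sum_subtractf)

lemma hsum_add: "hsum d (\<lambda>i. a i + b i) = hsum d a + hsum d b"
  by (simp add: hsum_def sum.distrib)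

theorem lemma3p14:
  fixes d :: nat and u :: "nat \<Rightarrow> nat"
  assumes "\<forall>k. u k \<le> d"
  shows "\<forall>z \<in> halfspace d. \<exists>!p. fst p \<in> worm d u \<and> snd p \<in> Lam d \<and> z = (\<lambda>i. fst p i + snd p i)"
proof
  fix z assume z: "z \<in> halfspace d"
  define n where "n = nat (hsum d z)"
  have hn: "hsum d z = int n" using z by (simp add: n_def halfspace_def)
  define w where "w = ab_prefix d u n"
  define t where "t = (\<lambda>i. z i - w i)"
  have hw: "hsum d w = int n" using hsum_ab[OF assms] w_def by simp
  show "\<exists>!p. fst p \<in> worm d u \<and> snd p \<in> Lam d \<and> z = (\<lambda>i. fst p i + snd p i)"
  proof (rule ex1I[of _ "(w, t)"])
    have ht: "hsum d t = 0" unfolding t_def hsum_diff using hn hw by simp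
    have "t \<in> lattice_vecs d" using z by (auto simp: t_def w_def halfspace_def lattice_vecs_def ab_prefix_def)
    then show "fst (w, t) \<in> worm d u \<and> snd (w, t) \<in> Lam d \<and> z = (\<lambda>i. fst (w, t) i + snd (w, t) i)"
      using ht by (auto simp: worm_def w_def t_def Lam_def)
  next
    fix p assume p: "fst p \<in> worm d u \<and> snd p \<in> Lam d \<and> z = (\<lambda>i. fst p i + snd p i)"
    then obtain m where m: "fst p = ab_prefix d u m" by (auto simp: worm_def)
    have "hsum d z = hsum d (fst p) + hsum d (snd p)" using p hsum_add by metis
    then have "int m = int n" using p hsum_ab[OF assms] m hn by (simp add: Lam_def)
    then have "fst p = w" using m w_def by simp
    moreover have "snd p = t" using p calculation by (auto simp: t_def)
    ultimately show "p = (w, t)" by (simp add: prod_eq_iff)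
  qed
qed

end
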